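(* Let $E$, $V$, $T$, $\eta$, $t>1$ and a $(T,E)$-decomposition $(\{W_1,\dots,W_h\},\rho)$ be as in the context, and assume that for every $i$ with $|W_i|>1$, $\sum_{e\in E:\,i\in\rho(e)}\eta(e)\le\beta$, where $\beta=4\eta(E)/t$. Let $F$ be the set of edges $f_{ij}$, over unordered pairs $\{i,j\}$, $i\neq j$, with $\sigma(i,j)$ defined, where $f_{ij}$ has the endpoints of $\sigma(i,j)$ and weight $\omega(i,j)=\sum_{e\in E:\rho(e)=\{i,j\}}w(e)$; set $\rho(f_{ij})=\{i,j\}$. Then for every $i$ with $|W_i|>1$, \[ \sum_{f\in F:\ i\in\rho(f)}\mathrm{st}_T(f)\le\beta. \]
   Context: Weighted edges $w[u,v]$ ($u\ne v$, $w>0$) on a vertex set $V$; $w(e)$ is the weight of $e$; $T$ is a spanning tree on $V$ with positive weights. Resistance of an edge is $1/w$, of a path the sum over its edges; for $e=w[u,v]$, $T(e)$ is the path in $T$ from $u$ to $v$, $\mathrm{st}_T(e)=w\cdot\mathrm{res}(T(e))$, $\eta(e)=\max(\mathrm{st}_T(e),1)$, $\eta(E)=\sum_{e\in E}\eta(e)$. A $(T,E)$-decomposition: sets $W_1,\dots,W_h$ covering $V$, each inducing a subtree of $T$ (possibly a single vertex), pairwise intersecting in at most one vertex, with $\rho$ assigning to each edge $(u,v)\in E$ either $\{i\}$ with $u,v\in W_i$ or $\{i,j\}$ ($i\ne j$) with one endpoint in $W_i$ and the other in $W_j$. For $i\ne j$, $\sigma(i,j)$ is the edge $e\in E$ with $\rho(e)=\{i,j\}$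 maximizing $w(e)/\eta(e)$ (ties broken by a fixed order), undefined if none exists. *)

theory Defs
  imports Complex_Main
begin

definition tpath :: "'v set set \<Rightarrow> 'v \<Rightarrow> 'v \<Rightarrow> 'v list \<Rightarrow> bool" where
  "tpath T u v p \<longleftrightarrow> p \<noteq> [] \<and> hd p = u \<and> last p = v \<and> distinct p \<and>
     (\<forall>i. Suc i < length p \<longrightarrow> {p ! i, p ! Suc i} \<in> T)"

definition spanning_tree :: "'v set \<Rightarrow> 'v set set \<Rightarrow> bool" where
  "spanning_tree V T \<longleftrightarrow> finite V \<and> V \<noteq> {} \<and>
     (\<forall>f\<in>T. \<exists>a b. f = {a, b} \<and> a \<noteq> b \<and> a \<in> V \<and> b \<in> V) \<and>
     (\<forall>u\<in>V. \<forall>v\<in>V. \<exists>!p. tpath T u v p)"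

definition tree_path :: "'v set set \<Rightarrow> 'v \<Rightarrow> 'v \<Rightarrow> 'v list" where
  "tree_path T u v = (THE p. tpath T u v p)"

definition tres :: "'v set set \<Rightarrow> ('v set \<Rightarrow> real) \<Rightarrow> 'v \<Rightarrow> 'v \<Rightarrow> real" where
  "tres T wT u v = (let p = tree_path T u v in
     (\<Sum>i<length p - 1. 1 / wT {p ! i, p ! Suc i}))"

definition stretch :: "'v set set \<Rightarrow> ('v set \<Rightarrow> real) \<Rightarrow> 'v \<Rightarrow> 'v \<Rightarrow> real \<Rightarrow> real" where
  "stretch T wT a b x = x * tres T wT a b"

definition eta :: "'v set set \<Rightarrow> ('v set \<Rightarrow> real) \<Rightarrow> 'v \<Rightarrow> 'v \<Rightarrow> real \<Rightarrow> real" where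
  "eta T wT a b x = max (stretch T wT a b x) 1"

(* (T,E)-decomposition with pieces W 1, ..., W h and assignment rho.
   Edges are elements of E :: 'e set with endpoints eu e, ev e and weight w e. *)
definition TE_decomposition ::
  "'v set \<Rightarrow> 'v set set \<Rightarrow> 'e set \<Rightarrow> ('e \<Rightarrow> 'v) \<Rightarrow> ('e \<Rightarrow> 'v) \<Rightarrow>
   nat \<Rightarrow> (nat \<Rightarrow> 'v set) \<Rightarrow> ('e \<Rightarrow> nat set) \<Rightarrow> bool" where
  "TE_decomposition V T E eu ev h W \<rho> \<longleftrightarrow>
     (\<Union>i\<in>{1..h}. W i) = V \<and>
     (\<forall>i\<in>{1..h}. W i \<noteq> {} \<and> W i \<subseteq> V \<and>
        (\<forall>a\<in>W i. \<forall>b\<in>W i. \<exists>p. tpath T a b p \<and> set p \<subseteq> W i)) \<and>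
     (\<forall>i\<in>{1..h}. \<forall>j\<in>{1..h}. i \<noteq> j \<longrightarrow> card (W i \<inter> W j) \<le> 1) \<and>
     (\<forall>e\<in>E.
        (\<exists>i\<in>{1..h}. \<rho> e = {i} \<and> eu e \<in> W i \<and> ev e \<in> W i) \<or>
        (\<exists>i\<in>{1..h}. \<exists>j\<in>{1..h}. i \<noteq> j \<and> \<rho> e = {i, j} \<and>
            ((eu e \<in> W i \<and> ev e \<in> W j) \<or> (eu e \<in> W j \<and> ev e \<in> W i))))"

definition sigma ::
  "'v set set \<Rightarrow> ('v set \<Rightarrow> real) \<Rightarrow> 'e set \<Rightarrow> ('e \<Rightarrow> 'v) \<Rightarrow> ('e \<Rightarrow> 'v) \<Rightarrow> ('e \<Rightarrow> real) \<Rightarrow>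
   ('e \<Rightarrow> nat set) \<Rightarrow> ('e \<Rightarrow> nat) \<Rightarrow> nat \<Rightarrow> nat \<Rightarrow> 'e option" where
  "sigma T wT E eu ev w \<rho> rk i j =
     (let C = {e\<in>E. \<rho> e = {i, j}};
          r = (\<lambda>e. w e / eta T wT (eu e) (ev e) (w e))
      in if i = j \<or> C = {} then None
         else Some (THE e. e \<in> C \<and>
                 (\<forall>e'\<in>C. r e' < r e \<or> (r e' = r e \<and> rk e' \<le> rk e))))"

definition omega :: "'e set \<Rightarrow> ('e \<Rightarrow> real) \<Rightarrow> ('e \<Rightarrow> nat set) \<Rightarrow> nat \<Rightarrow> nat \<Rightarrow> real" where
  "omega E w \<rho> i j = (\<Sum>e\<in>{e\<in>E. \<rho> e = {i, j}}. w e)"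

end

theory Submission
  imports Defs
begin

lemma the_max_exists:
  fixes r :: "'e \<Rightarrow> real" and rk :: "'e \<Rightarrow> nat"
  assumes fin: "finite C" and ne: "C \<noteq> {}" and inj: "inj_on rk C"
  shows "(THE e. e \<in> C \<and> (\<forall>e'\<in>C. r e' < r e \<or> (r e' = r e \<and> rk e' \<le> rk e))) \<in> C \<and>
         (\<forall>e'\<in>C. r e' \<le> r (THE e. e \<in> C \<and> (\<forall>e'\<in>C. r e' < r e \<or> (r e' = r e \<and> rk e' \<le> rk e))))"
proof -
  let ?P = "\<lambda>e. e \<in> C \<and> (\<forall>e'\<in>C. r e' < r e \<or> (r e' = r e \<and> rk e' \<le> rk e))"
  define m where "m = Max (r ` C)"
  define C' where "C' = {e\<in>C. r e = m}"
  have "m \<in> r ` C" unfolding m_def using fin ne by simp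
  then have C'ne: "C' \<noteq> {}" unfolding C'_def by auto
  have C'fin: "finite C'" unfolding C'_def using fin by simp
  have "Max (rk ` C') \<in> rk ` C'" using C'ne C'fin by simp
  then obtain s where s: "s \<in> C'" "rk s = Max (rk ` C')" by auto
  have Ps: "?P s"
  proof -
    have "s \<in> C" "r s = m" using s unfolding C'_def by auto
    moreover have "\<forall>e'\<in>C. r e' < r s \<or> (r e' = r s \<and> rk e' \<le> rk s)"
    proof
      fix e' assume e': "e' \<in> C"
      have "r e' \<le> m" unfolding m_def using fin e' by simp
      show "r e' < r s \<or> (r e' = r s \<and> rk e' \<le> rk s)"
      proof (cases "r e' = m")
        case True
        then have "e' \<in> C'" unfolding C'_def using e' by simp
        then have "rk e' \<le> rk s" using s C'fin by simp
        then show ?thesis using True \<open>r s = m\<close> by simp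
      qed (use \<open>r e' \<le> m\<close> \<open>r s = m\<close> in auto)
    qed
    ultimately show ?thesis by simp
  qed
  have uniq: "\<And>x. ?P x \<Longrightarrow> x = s"
  proof -
    fix x assume Px: "?P x"
    have "r x < r s \<or> (r x = r s \<and> rk x \<le> rk s)" using Ps Px by blast
    moreover have "r s < r x \<or> (r s = r x \<and> rk s \<le> rk x)" using Ps Px by blast
    ultimately have "rk x = rk s" by auto
    then show "x = s" using inj Px Ps by (meson inj_onD)
  qed
  have "(THE e. ?P e) = s" using Ps uniq by (rule the_equality)
  then show ?thesis using Ps by force
qed

theorem lemma10p2:
  fixes V :: "'v set" and T :: "'v set set" and wT :: "'v set \<Rightarrow> real"
    and E :: "'e set" and eu ev :: "'e \<Rightarrow> 'v" and w :: "'e \<Rightarrow> real"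
    and h :: nat and W :: "nat \<Rightarrow> 'v set" and \<rho> :: "'e \<Rightarrow> nat set"
    and rk :: "'e \<Rightarrow> nat" and t \<beta> :: real
  assumes tree: "spanning_tree V T"
    and wT_pos: "\<forall>f\<in>T. wT f > 0"
    and E_fin: "finite E"
    and E_edges: "\<forall>e\<in>E. eu e \<in> V \<and> ev e \<in> V \<and> eu e \<noteq> ev e \<and> w e > 0"
    and rk_inj: "inj_on rk E"
    and t_gt: "t > 1"
    and beta_def: "\<beta> = 4 * (\<Sum>e\<in>E. eta T wT (eu e) (ev e) (w e)) / t"
    and decomp: "TE_decomposition V T E eu ev h W \<rho>"
    and load: "\<forall>i\<in>{1..h}. card (W i) > 1 \<longrightarrow>
                 (\<Sum>e\<in>{e\<in>E. i \<in> \<rho> e}. eta T wT (eu e) (ev e) (w e)) \<le> \<beta>"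
  shows "\<forall>i\<in>{1..h}. card (W i) > 1 \<longrightarrow>
           (\<Sum>j\<in>{j\<in>{1..h}. j \<noteq> i \<and> sigma T wT E eu ev w \<rho> rk i j \<noteq> None}.
              (let s = the (sigma T wT E eu ev w \<rho> rk i j)
               in stretch T wT (eu s) (ev s) (omega E w \<rho> i j))) \<le> \<beta>"
proof (intro ballI impI)
  fix i assume i: "i \<in> {1..h}" and card: "card (W i) > 1"
  define et where "et = (\<lambda>e. eta T wT (eu e) (ev e) (w e))"
  define C where "C = (\<lambda>j. {e\<in>E. \<rho> e = {i, j}})"
  define J where "J = {j\<in>{1..h}. j \<noteq> i \<and> sigma T wT E eu ev w \<rho> rk i j \<noteq> None}"
  have et_pos: "\<And>e. et e \<ge> 1" unfolding et_def eta_def by simp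
  have key: "(let s = the (sigma T wT E eu ev w \<rho> rk i j)
               in stretch T wT (eu s) (ev s) (omega E w \<rho> i j)) \<le> sum et (C j)"
    if j: "j \<in> J" for j
  proof -
    have ij: "i \<noteq> j" using j unfolding J_def by auto
    have Cne: "C j \<noteq> {}" using j unfolding J_def sigma_def C_def by (auto simp: Let_def split: if_splits)
    have Cfin: "finite (C j)" unfolding C_def using E_fin by simp
    have Cinj: "inj_on rk (C j)" using rk_inj unfolding C_def by (rule inj_on_subset) auto
    define r where "r = (\<lambda>e. w e / eta T wT (eu e) (ev e) (w e))"
    define s where "s = (THE e. e \<in> C j \<and> (\<forall>e'\<in>C j. r e' < r e \<or> (r e' = r e \<and> rk e' \<le> rk e)))"
    have sig: "sigma T wT E eu ev w \<rho> rk i j = Some s"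
      using ij Cne unfolding sigma_def s_def C_def r_def by (simp add: Let_def)
    have sC: "s \<in> C j" and smax: "\<forall>e'\<in>C j. r e' \<le> r s"
      using the_max_exists[OF Cfin Cne Cinj, of r] unfolding s_def by auto
    have sE: "s \<in> E" using sC unfolding C_def by auto
    have ws: "w s > 0" using E_edges sE by auto
    have ets: "et s \<ge> 1" by (rule et_pos)
    define res where "res = tres T wT (eu s) (ev s)"
    have "w s * res \<le> et s" unfolding res_def et_def eta_def stretch_def by simp
    then have res_le: "res \<le> et s / w s" using ws by (simp add: field_simps)
    have om: "omega E w \<rho> i j = sum w (C j)" unfolding omega_def C_def by simp
    have om_nn: "sum w (C j) \<ge> 0" using E_edges unfolding C_def
      by (intro sum_nonneg) (auto intro: less_imp_le)
    have "stretch T wT (eu s) (ev s) (omega E w \<rho> i j) = sum w (C j) * res"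
      unfolding stretch_def om res_def by simp
    also have "\<dots> \<le> sum w (C j) * (et s / w s)" using res_le om_nn by (rule mult_left_mono)
    also have "\<dots> = (\<Sum>e\<in>C j. w e * et s / w s)" by (simp add: sum_distrib_right sum_divide_distrib)
    also have "\<dots> \<le> sum et (C j)"
    proof (rule sum_mono)
      fix e assume e: "e \<in> C j"
      have "r e \<le> r s" using smax e by auto
      then have "w e / et e \<le> w s / et s" unfolding r_def et_def by simp
      moreover have "et e > 0" using et_pos[of e] by simp
      moreover have "et s > 0" using ets by simp
      ultimately have "w e * et s \<le> w s * et e" by (simp add: field_simps)
      then show "w e * et s / w s \<le> et e" using ws by (simp add: field_simps)
    qed
    finally show ?thesis using sig by simp
  qed
  have Jfin: "finite J" unfolding J_def by simp
  have "(\<Sum>j\<in>J. (let s = the (sigma T wT E eu ev w \<rho> rk i j)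
               in stretch T wT (eu s) (ev s) (omega E w \<rho> i j))) \<le> (\<Sum>j\<in>J. sum et (C j))"
    by (rule sum_mono) (rule key)
  also have "(\<Sum>j\<in>J. sum et (C j)) = sum et (\<Union>j\<in>J. C j)"
  proof (rule sum.UNION_disjoint[symmetric])
    show "finite J" by (rule Jfin)
    show "\<forall>j\<in>J. finite (C j)" unfolding C_def using E_fin by simp
    show "\<forall>j\<in>J. \<forall>k\<in>J. j \<noteq> k \<longrightarrow> C j \<inter> C k = {}"
      unfolding C_def J_def by (auto simp: doubleton_eq_iff)
  qed
  also have "\<dots> \<le> sum et {e\<in>E. i \<in> \<rho> e}"
    by (rule sum_mono2) (use E_fin et_pos in \<open>auto simp: C_def intro: order_trans[OF zero_le_one]\<close>)
  also have "\<dots> \<le> \<beta>" using load i card unfolding et_def by auto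
  finally show "(\<Sum>j\<in>{j\<in>{1..h}. j \<noteq> i \<and> sigma T wT E eu ev w \<rho> rk i j \<noteq> None}.
              (let s = the (sigma T wT E eu ev w \<rho> rk i j)
               in stretch T wT (eu s) (ev s) (omega E w \<rho> i j))) \<le> \<beta>"
    unfolding J_def .
qed

end
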